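(* For every seller $j\in[m]$, the probability that the mechanism $\mathbb{M}_{\text{add}}$ makes seller $j$ an offer (for her bundle $S_j$ at payment $p(S_j)$) that she accepts is exactly $1/2$.
   Context: Two-sided market: buyers $[n]$, sellers $[m]$, items $[k]$; seller $j$ owns $I_j$ ($I_j$ disjoint, covering $[k]$). Buyer valuations $v_i$ are monotone normalized XOS functions on $2^{[k]}$ drawn independently from public distributions $G_i$; seller $j$'s valuation $w_j$ is additive over subsets of $I_j$, drawn independently from a public distribution $F_j$. For XOS $v$ and $T\subseteq[k]$, $a(v,T,\cdot)$ is a fixed additive function with $a(v,T,T)=v(T)$, $a(v,T,S)\le v(S)$. $\mathbb{A}$ maps each buyer profile $\mathbf v$ to an allocation $X^{\mathbb A}(\mathbf v)$ of disjoint bundles to buyers. $\mathrm{SW}^B_\ell(\mathbf v)=a(v_i,X^{\mathbb A}_i(\mathbf v),\{\ell\})$ if $\ell\in X^{\mathbb A}_i(\mathbf v)$, else $0$; $\mathrm{SW}^S_\ell(\mathbf w)=w_j(\{\ell\})$ for $\ell\in I_j$. $L_j=\{\ell\in I_j:\mathbb{E}[\mathrm{SW}^B_\ell]\ge4\mathbb{E}[\mathrm{SW}^S_\ell]\}$, $L=\bigcup_jL_j$, $p_\ell=\frac12\mathbb{E}[\mathrm{SW}^B_\ell(\mathbf v)]$ for $\ell\in L$. Mechanism $\mathbb{M}_{\text{add}}$: $\Lambda_1=L$; buyers $i=1,\dots,n$ in turn request a bundle $B_i\subseteq\Lambda_i$ maximizing their expected utility at prices $p_\ell$, and $\Lambda_{i+1}=\Lambda_i\setminus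 B_i$. Let $B=\bigcup_iB_i$. For each seller $j$: $S_j=B\cap L_j$, $p(S_j)=\sum_{\ell\in S_j}p_\ell$, $q_j=1/(2\Pr[w_j(S_j)\le p(S_j)])$; with probability $q_j$ the mechanism offers $j$ payment $p(S_j)$ for $S_j$, and she accepts iff $w_j(S_j)\le p(S_j)$; on acceptance items of $S_j$ go to their requesting buyers at prices $p_\ell$. *)

theory Defs
  imports "HOL-Probability.Probability"
begin

text \<open>Items are elements of a finite type 'i, sellers of a finite type 'j;
  seller ownership is a function owner :: 'i => 'j, so I_j = {l. owner l = j}
  (disjoint and covering). Buyers are 0,...,n-1 (buyer i+1 of the paper is i here).\<close>

definition additive_set_fun :: "('i::finite set \<Rightarrow> real) \<Rightarrow> bool" where
  "additive_set_fun f \<longleftrightarrow> (\<forall>S. f S = (\<Sum>l\<in>S. f {l}))"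

definition xos :: "('i::finite set \<Rightarrow> real) \<Rightarrow> bool" where
  "xos v \<longleftrightarrow> (\<exists>A. finite A \<and> A \<noteq> {} \<and>
      (\<forall>f\<in>A. additive_set_fun f \<and> (\<forall>l. 0 \<le> f {l})) \<and>
      (\<forall>S. v S = Max ((\<lambda>f. f S) ` A)))"

definition monotone_normalized :: "('i set \<Rightarrow> real) \<Rightarrow> bool" where
  "monotone_normalized v \<longleftrightarrow> v {} = 0 \<and> (\<forall>S T. S \<subseteq> T \<longrightarrow> v S \<le> v T)"

text \<open>Measurable space of buyer valuations (set functions) and of seller valuations
  (additive, given by per-item values).\<close>
definition val_space :: "('i::finite set \<Rightarrow> real) measure" where
  "val_space = PiM UNIV (\<lambda>_. borel)"

definition item_space :: "('i::finite \<Rightarrow> real) measure" where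
  "item_space = PiM UNIV (\<lambda>_. borel)"

definition buyer_space :: "nat \<Rightarrow> (nat \<Rightarrow> ('i set \<Rightarrow> real) measure) \<Rightarrow> (nat \<Rightarrow> 'i set \<Rightarrow> real) measure" where
  "buyer_space n G = PiM {..<n} G"

definition SWB :: "nat \<Rightarrow> (('i set \<Rightarrow> real) \<Rightarrow> 'i set \<Rightarrow> 'i set \<Rightarrow> real)
    \<Rightarrow> ((nat \<Rightarrow> 'i set \<Rightarrow> real) \<Rightarrow> nat \<Rightarrow> 'i set) \<Rightarrow> 'i \<Rightarrow> (nat \<Rightarrow> 'i set \<Rightarrow> real) \<Rightarrow> real" where
  "SWB n a X l v = (\<Sum>i<n. if l \<in> X v i then a (v i) (X v i) {l} else 0)"

definition EB where
  "EB n G a X l = (\<integral>v. SWB n a X l v \<partial>buyer_space n G)"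

definition ES :: "('j \<Rightarrow> ('i \<Rightarrow> real) measure) \<Rightarrow> ('i \<Rightarrow> 'j) \<Rightarrow> 'i \<Rightarrow> real" where
  "ES F owner l = (\<integral>w. w l \<partial>F (owner l))"

definition Lset where
  "Lset n G a X F owner = {l. EB n G a X l \<ge> 4 * ES F owner l}"

definition price where
  "price n G a X l = EB n G a X l / 2"

text \<open>Sequential posted-price phase: avail D L v i is Lambda_{i}, D is the buyers' demand rule.\<close>
fun avail :: "(nat \<Rightarrow> ('i set \<Rightarrow> real) \<Rightarrow> 'i set \<Rightarrow> 'i set) \<Rightarrow> 'i set
    \<Rightarrow> (nat \<Rightarrow> 'i set \<Rightarrow> real) \<Rightarrow> nat \<Rightarrow> 'i set" where
  "avail D L v 0 = L"
| "avail D L v (Suc i) = avail D L v i - D i (v i) (avail D L v i)"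

definition requested where
  "requested D L v i = D i (v i) (avail D L v i)"

definition bought where
  "bought n D L v = (\<Union>i<n. requested D L v i)"

definition Sj where
  "Sj n D L owner j v = bought n D L v \<inter> {l \<in> L. owner l = j}"

definition pset :: "('i \<Rightarrow> real) \<Rightarrow> 'i set \<Rightarrow> real" where
  "pset p S = (\<Sum>l\<in>S. p l)"

definition accept_prob :: "('j \<Rightarrow> ('i \<Rightarrow> real) measure) \<Rightarrow> ('i \<Rightarrow> real) \<Rightarrow> 'j \<Rightarrow> 'i set \<Rightarrow> real" where
  "accept_prob F p j S = measure (F j) {w \<in> space (F j). (\<Sum>l\<in>S. w l) \<le> pset p S}"

definition offer_prob where
  "offer_prob F p j S = 1 / (2 * accept_prob F p j S)"

text \<open>Full probability space: buyer valuations, seller valuations, and independent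
  uniform [0,1] coins c_j; the offer to seller j is made iff c_j < q_j.\<close>
definition mech_space :: "nat \<Rightarrow> (nat \<Rightarrow> ('i set \<Rightarrow> real) measure) \<Rightarrow> ('j::finite \<Rightarrow> ('i \<Rightarrow> real) measure)
    \<Rightarrow> ((nat \<Rightarrow> 'i set \<Rightarrow> real) \<times> ('j \<Rightarrow> 'i \<Rightarrow> real) \<times> ('j \<Rightarrow> real)) measure" where
  "mech_space n G F = buyer_space n G \<Otimes>\<^sub>M (PiM UNIV F \<Otimes>\<^sub>M PiM UNIV (\<lambda>_. uniform_measure lborel {0..1::real}))"

definition offer_accepted_event where
  "offer_accepted_event n G a X F owner D j =
    (let L = Lset n G a X F owner; p = price n G a X in
     {(v, w, c) \<in> space (mech_space n G F).
        c j < offer_prob F p j (Sj n D L owner j v) \<and>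
        (\<Sum>l\<in>Sj n D L owner j v. w j l) \<le> pset p (Sj n D L owner j v)})"

end

theory Submission
  imports Defs
begin

lemma avail_meas:
  assumes Dm: "\<And>i \<Lambda>. i < n \<Longrightarrow> (\<lambda>v. D i (v i) \<Lambda>) \<in> measurable M (count_space UNIV)"
  shows "k \<le> n \<Longrightarrow> (\<lambda>v. avail D L v k) \<in> measurable M (count_space (UNIV::'i::finite set set))"
proof (induction k)
  case 0 then show ?case by simp
next
  case (Suc k)
  have "(\<lambda>v. (\<lambda>\<Lambda> v. \<Lambda> - D k (v k) \<Lambda>) (avail D L v k) v) \<in> measurable M (count_space UNIV)"
  proof (rule measurable_compose_countable'[where I=UNIV and f="\<lambda>\<Lambda> v. \<Lambda> - D k (v k) \<Lambda>" and g="\<lambda>v. avail D L v k"])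
    fix \<Lambda> :: "'i set"
    have "(\<lambda>v. D k (v k) \<Lambda>) \<in> measurable M (count_space UNIV)" using Dm Suc.prems by simp
    then show "(\<lambda>v. \<Lambda> - D k (v k) \<Lambda>) \<in> measurable M (count_space UNIV)"
      using measurable_compose[OF _ measurable_count_space, of "\<lambda>v. D k (v k) \<Lambda>" M UNIV "\<lambda>s. \<Lambda> - s"] by simp
  qed (use Suc in auto)
  then show ?case by simp
qed

lemma bought_meas:
  assumes Dm: "\<And>i \<Lambda>. i < n \<Longrightarrow> (\<lambda>v. D i (v i) \<Lambda>) \<in> measurable M (count_space UNIV)"
  shows "k \<le> n \<Longrightarrow> (\<lambda>v. \<Union>i<k. requested D L v i) \<in> measurable M (count_space (UNIV::'i::finite set set))"
proof (induction k)
  case 0 then show ?case by simp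
next
  case (Suc k)
  have r: "(\<lambda>v. requested D L v k) \<in> measurable M (count_space UNIV)"
    unfolding requested_def
  proof (rule measurable_compose_countable'[where I=UNIV and f="\<lambda>\<Lambda> v. D k (v k) \<Lambda>" and g="\<lambda>v. avail D L v k", OF _ avail_meas[OF Dm]])
    fix \<Lambda> :: "'i set"
    show "(\<lambda>v. D k (v k) \<Lambda>) \<in> measurable M (count_space UNIV)" using Dm Suc.prems by simp
  qed (use Suc in auto)
  have "(\<lambda>v. (\<lambda>T v. T \<union> requested D L v k) (\<Union>i<k. requested D L v i) v) \<in> measurable M (count_space UNIV)"
  proof (rule measurable_compose_countable'[where I=UNIV and f="\<lambda>T v. T \<union> requested D L v k" and g="\<lambda>v. \<Union>i<k. requested D L v i"])
    fix T :: "'i set"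
    show "(\<lambda>v. T \<union> requested D L v k) \<in> measurable M (count_space UNIV)"
      using measurable_compose[OF r measurable_count_space, of "\<lambda>s. T \<union> s"] by simp
  qed (use Suc in auto)
  then show ?case by (simp add: lessThan_Suc Un_commute)
qed

lemma measure_pair_Times:
  assumes "prob_space M" "prob_space N" "A \<in> sets M" "B \<in> sets N"
  shows "measure (M \<Otimes>\<^sub>M N) (A \<times> B) = measure M A * measure N B"
proof -
  interpret N: prob_space N by fact
  have "emeasure (M \<Otimes>\<^sub>M N) (A \<times> B) = emeasure M A * emeasure N B"
    using assms by (intro N.emeasure_pair_measure_Times) auto
  then show ?thesis unfolding measure_def by (simp add: enn2real_mult)
qed

lemma markov_half:
  fixes Y :: "'a \<Rightarrow> real"
  assumes P: "prob_space M" and int: "integrable M Y" and nn: "AE x in M. 0 \<le> Y x"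
    and c: "2 * integral\<^sup>L M Y \<le> c"
  shows "measure M {x\<in>space M. Y x \<le> c} \<ge> 1/2"
proof -
  interpret prob_space M by fact
  have Ym[measurable]: "Y \<in> borel_measurable M" using int by auto
  have I0: "integral\<^sup>L M Y \<ge> 0" using nn by (rule integral_nonneg_AE)
  show ?thesis
  proof (cases "c > 0")
    case True
    have m: "measure M {x\<in>space M. Y x \<ge> c} \<le> integral\<^sup>L M Y / c"
      using int nn True by (intro integral_Markov_inequality_measure[where A="space M"]) auto
    also have "\<dots> \<le> 1/2" using c True by (simp add: field_simps)
    finally have m2: "measure M {x\<in>space M. Y x \<ge> c} \<le> 1/2" .
    have "1 = measure M (space M)" using prob_space by simp
    also have "\<dots> \<le> measure M ({x\<in>space M. Y x \<le> c} \<union> {x\<in>space M. Y x \<ge> c})"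
      by (intro finite_measure_mono) auto
    also have "\<dots> \<le> measure M {x\<in>space M. Y x \<le> c} + measure M {x\<in>space M. Y x \<ge> c}"
      by (intro measure_subadditive) auto
    finally show ?thesis using m2 by linarith
  next
    case False
    then have "integral\<^sup>L M Y = 0" using c I0 by linarith
    then have "AE x in M. Y x = 0" using integral_nonneg_eq_0_iff_AE[OF int nn] by simp
    then have "AE x in M. Y x \<le> c" using False c I0 by (auto elim: AE_mp)
    then have "measure M {x\<in>space M. Y x \<le> c} = 1"
      by (subst prob_Collect_eq_1) auto
    then show ?thesis by simp
  qed
qed

lemma uniform_lt:
  fixes t :: real
  assumes "0 \<le> t" "t \<le> 1"
  shows "measure (uniform_measure lborel {0..1::real}) {..<t} = t"
proof -
  have "emeasure (uniform_measure lborel {0..1::real}) {..<t} = emeasure lborel ({0..1} \<inter> {..<t}) / emeasure lborel {0..1::real}"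
    by (rule emeasure_uniform_measure) auto
  also have "{0..1} \<inter> {..<t} = {0..<t}" using assms by auto
  finally have "emeasure (uniform_measure lborel {0..1::real}) {..<t} = ennreal t"
    using assms by (simp add: divide_ennreal_def)
  then show ?thesis unfolding measure_def using assms by simp
qed

theorem proposition5:
  fixes n :: nat
    and owner :: "'i::finite \<Rightarrow> 'j::finite"
    and G :: "nat \<Rightarrow> ('i set \<Rightarrow> real) measure"
    and F :: "'j \<Rightarrow> ('i \<Rightarrow> real) measure"
    and a :: "('i set \<Rightarrow> real) \<Rightarrow> 'i set \<Rightarrow> 'i set \<Rightarrow> real"
    and X :: "(nat \<Rightarrow> 'i set \<Rightarrow> real) \<Rightarrow> nat \<Rightarrow> 'i set"
    and EU :: "nat \<Rightarrow> ('i set \<Rightarrow> real) \<Rightarrow> 'i set \<Rightarrow> real"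
    and D :: "nat \<Rightarrow> ('i set \<Rightarrow> real) \<Rightarrow> 'i set \<Rightarrow> 'i set"
    and j :: 'j
  assumes G_prob: "\<And>i. i < n \<Longrightarrow> prob_space (G i)"
    and G_sets: "\<And>i. i < n \<Longrightarrow> sets (G i) = sets val_space"
    and G_xos: "\<And>i. i < n \<Longrightarrow> AE v in G i. xos v \<and> monotone_normalized v"
    and F_prob: "\<And>j. prob_space (F j)"
    and F_sets: "\<And>j. sets (F j) = sets item_space"
    and F_nonneg: "\<And>j. AE w in F j. \<forall>l. 0 \<le> w l"
    and F_int: "\<And>j l. integrable (F j) (\<lambda>w. w l)"
    and a_supp: "\<And>v T. xos v \<Longrightarrow> additive_set_fun (a v T) \<and> a v T T = v T \<and> (\<forall>S. a v T S \<le> v S)"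
    and X_disj: "\<And>v i i'. i < n \<Longrightarrow> i' < n \<Longrightarrow> i \<noteq> i' \<Longrightarrow> X v i \<inter> X v i' = {}"
    and SWB_int: "\<And>l. integrable (buyer_space n G) (SWB n a X l)"
    and D_sub: "\<And>i v \<Lambda>. D i v \<Lambda> \<subseteq> \<Lambda>"
    and D_opt: "\<And>i v \<Lambda> T. T \<subseteq> \<Lambda> \<Longrightarrow> EU i v T \<le> EU i v (D i v \<Lambda>)"
    and D_meas: "\<And>i \<Lambda>. i < n \<Longrightarrow> (\<lambda>v. D i v \<Lambda>) \<in> measurable val_space (count_space UNIV)"
  shows "measure (mech_space n G F) (offer_accepted_event n G a X F owner D j) = 1 / 2"
proof -
  let ?L = "Lset n G a X F owner"
  let ?p = "price n G a X"
  let ?S = "\<lambda>v. Sj n D ?L owner j v"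
  let ?q = "\<lambda>T. offer_prob F ?p j T"
  let ?acc = "\<lambda>T. accept_prob F ?p j T"
  let ?Lj = "{l \<in> ?L. owner l = j}"
  let ?B = "buyer_space n G"
  let ?W = "PiM UNIV F"
  let ?Uu = "uniform_measure lborel {0..1::real}"
  let ?U = "PiM UNIV (\<lambda>_::'j. ?Uu)"
  have probB: "prob_space ?B" unfolding buyer_space_def by (rule prob_space_PiM) (use G_prob in auto)
  have probW: "prob_space ?W" by (rule prob_space_PiM) (use F_prob in auto)
  have probUu: "prob_space ?Uu" by (rule prob_space_uniform_measure) auto
  have probU: "prob_space ?U" by (rule prob_space_PiM) (use probUu in auto)
  have probWU: "prob_space (?W \<Otimes>\<^sub>M ?U)" using probW probU by (rule prob_space_pair)
  have probM: "prob_space (?B \<Otimes>\<^sub>M (?W \<Otimes>\<^sub>M ?U))" using probB probWU by (rule prob_space_pair)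
  have Dm: "(\<lambda>v. D i (v i) \<Lambda>) \<in> measurable ?B (count_space UNIV)" if "i < n" for i \<Lambda>
  proof -
    have c: "(\<lambda>v. v i) \<in> measurable ?B (G i)" unfolding buyer_space_def
      using that by (intro measurable_component_singleton) auto
    have "(\<lambda>v. v i) \<in> measurable ?B val_space"
      using c measurable_cong_sets[OF refl G_sets[OF that]] by blast
    then show ?thesis using measurable_compose[OF _ D_meas[OF that]] by blast
  qed
  have bm: "(\<lambda>v. \<Union>i<n. requested D ?L v i) \<in> measurable ?B (count_space UNIV)"
    by (rule bought_meas[OF Dm]) auto
  have Smeas: "?S \<in> measurable ?B (count_space UNIV)"
    unfolding Sj_def bought_def
    using measurable_compose[OF bm measurable_count_space, of "\<lambda>s. s \<inter> ?Lj"] by simp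
  have acc_ge: "?acc T \<ge> 1/2" if T: "T \<subseteq> ?Lj" for T
  proof -
    interpret Fj: prob_space "F j" by (rule F_prob)
    have int: "integrable (F j) (\<lambda>w. \<Sum>l\<in>T. w l)" using F_int by auto
    have nn: "AE w in F j. 0 \<le> (\<Sum>l\<in>T. w l)"
      using F_nonneg[of j] by (auto elim!: AE_mp intro!: sum_nonneg)
    have "integral\<^sup>L (F j) (\<lambda>w. \<Sum>l\<in>T. w l) = (\<Sum>l\<in>T. ES F owner l)"
      using T F_int by (auto simp: ES_def intro!: sum.cong)
    also have "2 * \<dots> \<le> pset ?p T"
      unfolding pset_def sum_distrib_left
      using T by (intro sum_mono) (auto simp: Lset_def price_def)
    finally have "2 * integral\<^sup>L (F j) (\<lambda>w. \<Sum>l\<in>T. w l) \<le> pset ?p T" .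
    from markov_half[OF F_prob int nn this] show ?thesis
      unfolding accept_prob_def .
  qed
  define A where "A T = ?S -` {T} \<inter> space ?B" for T
  define BW where "BW T = {w \<in> space ?W. (\<Sum>l\<in>T. w j l) \<le> pset ?p T}" for T
  define CU where "CU T = {c \<in> space ?U. c j < ?q T}" for T
  have E: "offer_accepted_event n G a X F owner D j = (\<Union>T\<in>UNIV. A T \<times> (BW T \<times> CU T))"
    unfolding offer_accepted_event_def Let_def mech_space_def A_def BW_def CU_def
    by (auto simp: space_pair_measure)
  have A_sets: "A T \<in> sets ?B" for T
    unfolding A_def using Smeas by (rule measurable_sets) auto
  have compW: "(\<lambda>w. w j) \<in> measurable ?W (F j)" by (rule measurable_component_singleton) auto
  have sm: "(\<lambda>x. \<Sum>l\<in>T. x l) \<in> borel_measurable (F j)" for T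
  proof -
    have "(\<lambda>x. \<Sum>l\<in>T. x l) \<in> borel_measurable item_space" unfolding item_space_def by measurable
    then show ?thesis using measurable_cong_sets[OF F_sets[of j] refl] by blast
  qed
  define Acc where "Acc T = {x \<in> space (F j). (\<Sum>l\<in>T. x l) \<le> pset ?p T}" for T
  have Acc_sets: "Acc T \<in> sets (F j)" for T
  proof -
    have "Acc T = (\<lambda>x. \<Sum>l\<in>T. x l) -` {..pset ?p T} \<inter> space (F j)" unfolding Acc_def by auto
    then show ?thesis using measurable_sets[OF sm[of T]] by auto
  qed
  have BW_eq: "BW T = (\<lambda>w. w j) -` Acc T \<inter> space ?W" for T
    unfolding BW_def Acc_def using measurable_space[OF compW] by auto
  have BW_sets: "BW T \<in> sets ?W" for T
    unfolding BW_eq using measurable_sets[OF compW Acc_sets] .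
  have BW_meas: "measure ?W (BW T) = ?acc T" for T
  proof -
    have "measure ?W (BW T) = measure (distr ?W (F j) (\<lambda>w. w j)) (Acc T)"
      unfolding BW_eq using compW Acc_sets by (simp add: measure_distr)
    also have "distr ?W (F j) (\<lambda>w. w j) = F j"
      using F_prob by (intro distr_PiM_component) auto
    finally show ?thesis unfolding accept_prob_def Acc_def by simp
  qed
  have compU: "(\<lambda>c. c j) \<in> measurable ?U ?Uu" by (rule measurable_component_singleton) auto
  have CU_eq: "CU T = (\<lambda>c. c j) -` {..<?q T} \<inter> space ?U" for T
    unfolding CU_def by auto
  have CU_sets: "CU T \<in> sets ?U" for T
    unfolding CU_eq by (rule measurable_sets[OF compU]) auto
  have CU_meas: "measure ?U (CU T) = ?q T" if "0 \<le> ?q T" "?q T \<le> 1" for T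
  proof -
    have "measure ?U (CU T) = measure (distr ?U ?Uu (\<lambda>c. c j)) {..<?q T}"
      unfolding CU_eq using compU by (simp add: measure_distr)
    also have "distr ?U ?Uu (\<lambda>c. c j) = ?Uu"
      using probUu by (intro distr_PiM_component) auto
    finally show ?thesis using uniform_lt[OF that] by simp
  qed
  have term_eq: "measure (?B \<Otimes>\<^sub>M (?W \<Otimes>\<^sub>M ?U)) (A T \<times> (BW T \<times> CU T)) = measure ?B (A T) / 2" for T
  proof -
    have "measure (?B \<Otimes>\<^sub>M (?W \<Otimes>\<^sub>M ?U)) (A T \<times> (BW T \<times> CU T))
        = measure ?B (A T) * (measure ?W (BW T) * measure ?U (CU T))"
      using probB probWU probW probU A_sets BW_sets CU_sets
      by (simp add: measure_pair_Times)
    also have "\<dots> = measure ?B (A T) / 2"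
    proof (cases "A T = {}")
      case True then show ?thesis by simp
    next
      case False
      then obtain v where "?S v = T" unfolding A_def by auto
      then have "T \<subseteq> ?Lj" unfolding Sj_def by auto
      from acc_ge[OF this] have g: "?acc T \<ge> 1/2" .
      have le1: "?acc T \<le> 1" unfolding accept_prob_def using prob_space.prob_le_1[OF F_prob] by blast
      have q: "?q T = 1 / (2 * ?acc T)" unfolding offer_prob_def ..
      have "0 \<le> ?q T" "?q T \<le> 1" using g unfolding q by (auto simp: field_simps)
      then show ?thesis using CU_meas BW_meas g q by simp
    qed
    finally show ?thesis .
  qed
  have "measure (mech_space n G F) (offer_accepted_event n G a X F owner D j)
      = (\<Sum>T\<in>UNIV. measure (?B \<Otimes>\<^sub>M (?W \<Otimes>\<^sub>M ?U)) (A T \<times> (BW T \<times> CU T)))"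
    unfolding E mech_space_def
  proof (rule measure_finite_Union)
    show "(\<lambda>T. A T \<times> (BW T \<times> CU T)) ` UNIV \<subseteq> sets (?B \<Otimes>\<^sub>M (?W \<Otimes>\<^sub>M ?U))"
      using A_sets BW_sets CU_sets by auto
    show "disjoint_family_on (\<lambda>T. A T \<times> (BW T \<times> CU T)) UNIV"
      unfolding disjoint_family_on_def A_def by auto
    show "emeasure (?B \<Otimes>\<^sub>M (?W \<Otimes>\<^sub>M ?U)) (A T \<times> (BW T \<times> CU T)) \<noteq> \<infinity>" for T
      using finite_measure.emeasure_finite[OF prob_space.axioms(1)[OF probM]] by simp
  qed auto
  also have "\<dots> = (\<Sum>T\<in>UNIV. measure ?B (A T)) / 2"
    by (simp add: term_eq sum_divide_distrib)
  also have "(\<Sum>T\<in>UNIV. measure ?B (A T)) = measure ?B (\<Union>T\<in>UNIV. A T)"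
    by (rule measure_finite_Union[symmetric])
       (use A_sets finite_measure.emeasure_finite[OF prob_space.axioms(1)[OF probB]] in \<open>auto simp: disjoint_family_on_def A_def\<close>)
  also have "(\<Union>T\<in>UNIV. A T) = space ?B" unfolding A_def by auto
  also have "measure ?B (space ?B) = 1" using prob_space.prob_space[OF probB] .
  finally show ?thesis by simp
qed

end
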